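(* Let $F$ be an ordered $(m,n)$-forest with priority traversal $\tau$. Then $\mathrm{Rec}(F)=\mathrm{Rec}(\tau)$.
   Context: $[m]=\{1,\dots,m\}$. An ordered $(m,n)$-forest is a rooted forest with $n+1$ nodes and $m$ edges whose component trees $T_0,\dots,T_{n-m}$ are totally ordered, with unlabeled roots marked $\circ,\circ_1,\dots,\circ_{n-m}$, and non-root vertices labeled bijectively by $[m]$. Priority search: initially only the children of $\circ$ are unblocked; at each step visit the unblocked unvisited node with the smallest label and unblock its children; when a tree is exhausted, move to the next tree, visit its root and unblock its children. The priority traversal $\tau$ is the word of length $n$ recording the labels of visited nodes in order, with $-$ recorded for each root visited (the initial visit of $\circ$ is not recorded). $\mathrm{Rec}(F)$ is the set of forest records: non-root nodes whose label is the largest among the labels of the non-root nodes on the path from the root of their tree to them. For a word in $[m]\cup\{-\}$, $\mathrm{Rec}$ denotes the set of its records, i.e. the left-to-right maxima of its maximal subwords not containing $-$. *)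

theory Defs
  imports Main
begin

text \<open>Nodes of an ordered (m,n)-forest: the roots are Root 0 (the root written as a plain circle),
 Root 1, ..., Root (n-m); the non-root vertices are Lab 1, ..., Lab m.
 A forest is given by the parent function par, defined on the labels 1..m.\<close>
datatype fnode = Root nat | Lab nat

inductive anc :: "(nat \<Rightarrow> fnode) \<Rightarrow> nat \<Rightarrow> nat \<Rightarrow> bool" for par where
  anc_refl: "anc par i i"
| anc_step: "par i = Lab j \<Longrightarrow> anc par j k \<Longrightarrow> anc par i k"

text \<open>par describes an ordered (m,n)-forest: n+1 nodes, m edges, trees T_0..T_(n-m).\<close>
definition ordered_forest :: "nat \<Rightarrow> nat \<Rightarrow> (nat \<Rightarrow> fnode) \<Rightarrow> bool" where
  "ordered_forest m n par \<longleftrightarrow> m \<le> n \<and>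
     (\<forall>i\<in>{1..m}. (\<forall>j. par i = Lab j \<longrightarrow> j \<in> {1..m}) \<and> (\<forall>k. par i = Root k \<longrightarrow> k \<le> n - m)) \<and>
     (\<forall>i\<in>{1..m}. \<exists>j k. anc par i j \<and> par j = Root k)"

definition children :: "(nat \<Rightarrow> fnode) \<Rightarrow> nat \<Rightarrow> fnode \<Rightarrow> nat set" where
  "children par m v = {i \<in> {1..m}. par i = v}"

text \<open>Priority search with a fuel argument. State: index k of the current tree, set U of
 unblocked unvisited labels. Some x records the visit of label x, None records a root visit (the "-").\<close>
fun psearch :: "(nat \<Rightarrow> fnode) \<Rightarrow> nat \<Rightarrow> nat \<Rightarrow> nat \<Rightarrow> nat \<Rightarrow> nat set \<Rightarrow> nat option list" where
  "psearch par m r 0 k U = []"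
| "psearch par m r (Suc f) k U =
     (if U \<noteq> {} then
        Some (Min U) # psearch par m r f k ((U - {Min U}) \<union> children par m (Lab (Min U)))
      else if k < r then
        None # psearch par m r f (Suc k) (children par m (Root (Suc k)))
      else [])"

text \<open>The priority traversal (a word of length n; the initial visit of Root 0 is not recorded).\<close>
definition priority_traversal :: "nat \<Rightarrow> nat \<Rightarrow> (nat \<Rightarrow> fnode) \<Rightarrow> nat option list" where
  "priority_traversal m n par = psearch par m (n - m) n 0 (children par m (Root 0))"

definition forest_rec :: "nat \<Rightarrow> (nat \<Rightarrow> fnode) \<Rightarrow> nat set" where
  "forest_rec m par = {i \<in> {1..m}. \<forall>j. anc par i j \<longrightarrow> j \<le> i}"

text \<open>Records of a word over [m] \<union> {-}: left-to-right maxima of the maximal subwords without -.\<close>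
definition word_rec :: "nat option list \<Rightarrow> nat set" where
  "word_rec w = {x. \<exists>p < length w. w ! p = Some x \<and>
       (\<forall>q < p. (\<forall>r. q \<le> r \<and> r < p \<longrightarrow> w ! r \<noteq> None) \<longrightarrow> (\<forall>y. w ! q = Some y \<longrightarrow> y < x))}"

end

theory Submission
  imports Defs
begin

lemma anc_trans: "anc par x y \<Longrightarrow> anc par y z \<Longrightarrow> anc par x z"
  by (induction rule: anc.induct) (auto intro: anc.intros)

lemma anc_inv: "anc par x y \<Longrightarrow> x \<noteq> y \<Longrightarrow> \<exists>z. par x = Lab z \<and> anc par z y"
  by (cases rule: anc.cases) auto

lemma anc_lin: "anc par x a \<Longrightarrow> anc par x b \<Longrightarrow> anc par a b \<or> anc par b a"
proof (induction arbitrary: b rule: anc.induct)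
  case (anc_refl i) then show ?case by blast
next
  case (anc_step i j k)
  show ?case
  proof (cases "b = i")
    case True then show ?thesis using anc_step.hyps by (auto intro: anc.intros)
  next
    case False
    then obtain z where "par i = Lab z" "anc par z b" using anc_inv[OF anc_step.prems] by blast
    then show ?thesis using anc_step by auto
  qed
qed

lemma anc_root_stop: "anc par j b \<Longrightarrow> par j = Root k \<Longrightarrow> b = j"
  by (cases rule: anc.cases) auto

lemma anc_closed: "anc par x j \<Longrightarrow> ordered_forest m n par \<Longrightarrow> x \<in> {1..m} \<Longrightarrow> j \<in> {1..m}"
proof (induction rule: anc.induct)
  case (anc_refl i) then show ?case by simp
next
  case (anc_step i j k)
  then have "j \<in> {1..m}" unfolding ordered_forest_def by blast
  then show ?case using anc_step by blast
qed

lemma anc_last: "anc par x u \<Longrightarrow> x \<noteq> u \<Longrightarrow> \<exists>c. par c = Lab u \<and> anc par x c"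
proof (induction rule: anc.induct)
  case (anc_refl i) then show ?case by simp
next
  case (anc_step i j k)
  show ?case
  proof (cases "j = k")
    case True then show ?thesis using anc_step by (auto intro: anc.intros)
  next
    case False
    then obtain c where "par c = Lab k" "anc par j c" using anc_step by blast
    then show ?thesis using anc_step by (auto intro: anc.intros)
  qed
qed

lemma anc_antisym_aux: "anc par x j \<Longrightarrow> par j = Root k \<Longrightarrow> anc par x y \<Longrightarrow> anc par y x \<Longrightarrow> y = x"
proof (induction arbitrary: y rule: anc.induct)
  case (anc_refl i) then show ?case using anc_root_stop by blast
next
  case (anc_step i z j')
  show ?case
  proof (rule ccontr)
    assume ne: "y \<noteq> i"
    have zy: "anc par z y" using anc_inv[OF anc_step.prems(2)] ne anc_step.hyps(1) by auto
    have iz: "anc par i z" using anc_step.hyps(1) by (auto intro: anc.intros)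
    have yz: "anc par y z" using anc_trans[OF anc_step.prems(3) iz] .
    have "y = z" using anc_step.IH[OF anc_step.prems(1) zy yz] .
    then have "anc par z i" using anc_step.prems(3) by simp
    then have "i = z" using anc_step.IH[OF anc_step.prems(1) _ iz] by simp
    then show False using ne \<open>y = z\<close> by simp
  qed
qed

lemma anc_antisym: "ordered_forest m n par \<Longrightarrow> x \<in> {1..m} \<Longrightarrow> anc par x y \<Longrightarrow> anc par y x \<Longrightarrow> x = y"
  unfolding ordered_forest_def using anc_antisym_aux by metis

definition intree :: "(nat \<Rightarrow> fnode) \<Rightarrow> nat \<Rightarrow> nat \<Rightarrow> bool" where
  "intree par x k \<longleftrightarrow> (\<exists>j. anc par x j \<and> par j = Root k)"

lemma intree_unique: "intree par x k1 \<Longrightarrow> intree par x k2 \<Longrightarrow> k1 = k2"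
  unfolding intree_def using anc_lin anc_root_stop by (metis fnode.inject(1))

lemma intree_up: "anc par x j \<Longrightarrow> intree par j k \<Longrightarrow> intree par x k"
  unfolding intree_def using anc_trans by blast

lemma intree_down: "intree par x k \<Longrightarrow> anc par x j \<Longrightarrow> intree par j k"
  unfolding intree_def using anc_lin anc_root_stop by metis

lemma intree_ex: "ordered_forest m n par \<Longrightarrow> x \<in> {1..m} \<Longrightarrow> \<exists>k \<le> n - m. intree par x k"
proof -
  assume of: "ordered_forest m n par" and x: "x \<in> {1..m}"
  then obtain j k where "anc par x j" "par j = Root k" unfolding ordered_forest_def by blast
  moreover have "j \<in> {1..m}" using anc_closed[OF \<open>anc par x j\<close> of x] .
  ultimately show ?thesis using of unfolding ordered_forest_def intree_def by blast
qed


definition fbelow :: "(nat \<Rightarrow> fnode) \<Rightarrow> nat \<Rightarrow> nat set \<Rightarrow> nat set" where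
  "fbelow par m U = {x \<in> {1..m}. \<exists>a\<in>U. anc par x a}"

definition frem :: "(nat \<Rightarrow> fnode) \<Rightarrow> nat \<Rightarrow> nat \<Rightarrow> nat set \<Rightarrow> nat set" where
  "frem par m k U = fbelow par m U \<union> {x \<in> {1..m}. \<exists>k'>k. intree par x k'}"

definition finv :: "(nat \<Rightarrow> fnode) \<Rightarrow> nat \<Rightarrow> nat \<Rightarrow> nat \<Rightarrow> nat set \<Rightarrow> bool" where
  "finv par m r k U \<longleftrightarrow> k \<le> r \<and> U \<subseteq> {1..m} \<and> (\<forall>u\<in>U. intree par u k) \<and>
     (\<forall>u\<in>U. par u = Root k \<or> (\<exists>j. par u = Lab j \<and> j \<notin> fbelow par m U))"

context
  fixes m n :: nat and par :: "nat \<Rightarrow> fnode"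
  assumes OF: "ordered_forest m n par"
begin

lemma par_lab: "i \<in> {1..m} \<Longrightarrow> par i = Lab j \<Longrightarrow> j \<in> {1..m}"
  using OF unfolding ordered_forest_def by blast

lemma par_root: "i \<in> {1..m} \<Longrightarrow> par i = Root k \<Longrightarrow> k \<le> n - m"
  using OF unfolding ordered_forest_def by blast

lemma S1:
  assumes inv: "finv par m r k U" and u: "u \<in> U" and a: "anc par u j" and ne: "j \<noteq> u"
  shows "j \<notin> fbelow par m U"
proof
  assume jb: "j \<in> fbelow par m U"
  obtain y where y: "par u = Lab y" "anc par y j" using anc_inv[OF a] ne by auto
  have uin: "u \<in> {1..m}" using inv u unfolding finv_def by blast
  have yin: "y \<in> {1..m}" using par_lab[OF uin y(1)] .
  have "y \<in> fbelow par m U" using jb y(2) yin anc_trans unfolding fbelow_def by blast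
  moreover have "y \<notin> fbelow par m U" using inv u y(1) unfolding finv_def by auto
  ultimately show False by blast
qed

lemma below_step:
  assumes inv: "finv par m r k U" and u: "u \<in> U"
  shows "fbelow par m (U - {u} \<union> children par m (Lab u)) = fbelow par m U - {u}"
proof
  have uin: "u \<in> {1..m}" using inv u unfolding finv_def by blast
  have ub: "u \<in> fbelow par m U" using uin u unfolding fbelow_def by (blast intro: anc.intros)
  show "fbelow par m (U - {u} \<union> children par m (Lab u)) \<subseteq> fbelow par m U - {u}"
  proof
    fix x assume x: "x \<in> fbelow par m (U - {u} \<union> children par m (Lab u))"
    then obtain a where xin: "x \<in> {1..m}" and a: "a \<in> U - {u} \<union> children par m (Lab u)" "anc par x a"
      unfolding fbelow_def by blast
    show "x \<in> fbelow par m U - {u}"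
    proof (cases "a \<in> U - {u}")
      case True
      then have "x \<in> fbelow par m U" using xin a unfolding fbelow_def by blast
      moreover have "x \<noteq> u"
      proof
        assume "x = u"
        then have "a \<notin> fbelow par m U" using S1[OF inv u] a True by auto
        moreover have "a \<in> {1..m}" using True inv unfolding finv_def by blast
        ultimately show False using True unfolding fbelow_def by (blast intro: anc.intros)
      qed
      ultimately show ?thesis by blast
    next
      case False
      then have pa: "par a = Lab u" and ain: "a \<in> {1..m}" using a unfolding children_def by auto
      have au: "anc par a u" using pa by (blast intro: anc.intros)
      have "anc par x u" using anc_trans[OF a(2) au] .
      then have "x \<in> fbelow par m U" using xin u unfolding fbelow_def by blast
      moreover have "x \<noteq> u"
      proof
        assume "x = u"
        then have "a = u" using anc_antisym[OF OF ain au] a(2) by simp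
        then have "par u = Lab u" using pa by simp
        then show False using inv u ub unfolding finv_def by auto
      qed
      ultimately show ?thesis by blast
    qed
  qed
  show "fbelow par m U - {u} \<subseteq> fbelow par m (U - {u} \<union> children par m (Lab u))"
  proof
    fix x assume x: "x \<in> fbelow par m U - {u}"
    then obtain a where xin: "x \<in> {1..m}" and a: "a \<in> U" "anc par x a" and xu: "x \<noteq> u"
      unfolding fbelow_def by blast
    show "x \<in> fbelow par m (U - {u} \<union> children par m (Lab u))"
    proof (cases "a = u")
      case False then show ?thesis using xin a unfolding fbelow_def by blast
    next
      case True
      then obtain c where c: "par c = Lab u" "anc par x c" using anc_last a xu by blast
      have "c \<in> {1..m}" using anc_closed[OF c(2) OF xin] .
      then have "c \<in> children par m (Lab u)" using c unfolding children_def by simp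
      then show ?thesis using xin c unfolding fbelow_def by blast
    qed
  qed
qed

lemma inv_step:
  assumes inv: "finv par m r k U" and u: "u \<in> U"
  shows "finv par m r k (U - {u} \<union> children par m (Lab u))"
proof -
  let ?U' = "U - {u} \<union> children par m (Lab u)"
  have uin: "u \<in> {1..m}" using inv u unfolding finv_def by blast
  have ub: "u \<in> fbelow par m U" using uin u unfolding fbelow_def by (blast intro: anc.intros)
  have tu: "intree par u k" using inv u unfolding finv_def by blast
  have B: "fbelow par m ?U' = fbelow par m U - {u}" using below_step[OF inv u] .
  have "?U' \<subseteq> {1..m}" using inv unfolding finv_def children_def by auto
  moreover have "\<forall>v\<in>?U'. intree par v k"
  proof
    fix v assume v: "v \<in> ?U'"
    show "intree par v k"
    proof (cases "v \<in> U")
      case True then show ?thesis using inv unfolding finv_def by blast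
    next
      case False
      then have "par v = Lab u" using v unfolding children_def by auto
      then have "anc par v u" by (blast intro: anc.intros)
      then show ?thesis using intree_up tu by blast
    qed
  qed
  moreover have "\<forall>v\<in>?U'. par v = Root k \<or> (\<exists>j. par v = Lab j \<and> j \<notin> fbelow par m ?U')"
  proof
    fix v assume v: "v \<in> ?U'"
    show "par v = Root k \<or> (\<exists>j. par v = Lab j \<and> j \<notin> fbelow par m ?U')"
    proof (cases "v \<in> U - {u}")
      case True then show ?thesis using inv B unfolding finv_def by blast
    next
      case False
      then have "par v = Lab u" using v unfolding children_def by auto
      then show ?thesis using B by blast
    qed
  qed
  ultimately show ?thesis using inv unfolding finv_def by blast
qed

lemma rem_step:
  assumes inv: "finv par m r k U" and u: "u \<in> U"
  shows "frem par m k (U - {u} \<union> children par m (Lab u)) = frem par m k U - {u}"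
proof -
  have tu: "intree par u k" using inv u unfolding finv_def by blast
  have "u \<notin> {x \<in> {1..m}. \<exists>k'>k. intree par x k'}" using intree_unique[OF tu] by fastforce
  then show ?thesis unfolding frem_def using below_step[OF inv u] by blast
qed

lemma below_root: "fbelow par m (children par m (Root k)) = {x \<in> {1..m}. intree par x k}"
proof
  show "fbelow par m (children par m (Root k)) \<subseteq> {x \<in> {1..m}. intree par x k}"
    unfolding fbelow_def children_def intree_def by blast
  show "{x \<in> {1..m}. intree par x k} \<subseteq> fbelow par m (children par m (Root k))"
  proof
    fix x assume x: "x \<in> {x \<in> {1..m}. intree par x k}"
    then obtain j where j: "anc par x j" "par j = Root k" unfolding intree_def by blast
    have "j \<in> {1..m}" using anc_closed[OF j(1) OF] x by blast
    then show "x \<in> fbelow par m (children par m (Root k))"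
      using x j unfolding fbelow_def children_def by blast
  qed
qed

lemma inv_root: "k' \<le> r \<Longrightarrow> finv par m r k' (children par m (Root k'))"
  unfolding finv_def children_def intree_def by (auto intro: anc.intros)

lemma rem_root:
  "frem par m (Suc k) (children par m (Root (Suc k))) = frem par m k {}"
proof -
  have e: "(\<exists>k'>k. P k') \<longleftrightarrow> P (Suc k) \<or> (\<exists>k'>Suc k. P k')" for P :: "nat \<Rightarrow> bool"
    by (metis Suc_lessD Suc_lessI lessI)
  show ?thesis unfolding frem_def below_root using e[of "intree par _"] by (auto simp: fbelow_def)
qed

lemma rem_end: "\<not> k < n - m \<Longrightarrow> frem par m k {} = {}"
proof -
  assume nk: "\<not> k < n - m"
  have "\<not> (x \<in> {1..m} \<and> k' > k \<and> intree par x k')" for x k'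
  proof
    assume a: "x \<in> {1..m} \<and> k' > k \<and> intree par x k'"
    then obtain k0 where "k0 \<le> n - m" "intree par x k0" using intree_ex[OF OF] by blast
    then have "k' = k0" using a intree_unique by blast
    then show False using a nk \<open>k0 \<le> n - m\<close> by simp
  qed
  then show ?thesis unfolding frem_def fbelow_def by blast
qed

lemma rem_init: "frem par m 0 (children par m (Root 0)) = {1..m}"
proof -
  have "intree par x 0 \<or> (\<exists>k'>0. intree par x k')" if "x \<in> {1..m}" for x
    using intree_ex[OF OF that] by (metis gr0I)
  then show ?thesis unfolding frem_def below_root by blast
qed

lemma rem_sub: "frem par m k U \<subseteq> {1..m}"
  unfolding frem_def fbelow_def by blast

lemma S8:
  assumes x: "x \<in> frem par m k U" and a: "anc par x j" and j: "j \<notin> frem par m k U"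
  shows "x \<in> fbelow par m U"
proof (rule ccontr)
  assume "x \<notin> fbelow par m U"
  then obtain k' where "k' > k" "intree par x k'" "x \<in> {1..m}" using x unfolding frem_def by blast
  moreover have "j \<in> {1..m}" using anc_closed[OF a OF] \<open>x \<in> {1..m}\<close> by blast
  ultimately show False using j intree_down[OF _ a] unfolding frem_def by blast
qed


lemma ps_cons: "U \<noteq> {} \<Longrightarrow> psearch par m r (Suc f) k U =
   Some (Min U) # psearch par m r f k (U - {Min U} \<union> children par m (Lab (Min U)))" by simp
lemma ps_root: "k < r \<Longrightarrow> psearch par m r (Suc f) k {} =
   None # psearch par m r f (Suc k) (children par m (Root (Suc k)))" by simp
lemma ps_end: "\<not> k < r \<Longrightarrow> psearch par m r (Suc f) k {} = []" by simp

lemma minU: assumes "finv par m r k U" "U \<noteq> {}" shows "Min U \<in> U" "\<And>c. c \<in> U \<Longrightarrow> Min U \<le> c"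
proof -
  have "finite U" using assms(1) unfolding finv_def using finite_subset by blast
  then show "Min U \<in> U" "\<And>c. c \<in> U \<Longrightarrow> Min U \<le> c" using assms(2) by auto
qed

lemma below_rem: "fbelow par m U \<subseteq> frem par m k U" unfolding frem_def by blast
lemma in_below: "finv par m r k U \<Longrightarrow> u \<in> U \<Longrightarrow> u \<in> fbelow par m U"
  unfolding finv_def fbelow_def by (blast intro: anc.intros)

lemma PA1: "finv par m (n-m) k U \<Longrightarrow> Some x \<in> set (psearch par m (n-m) f k U) \<Longrightarrow> x \<in> frem par m k U"
proof (induction f arbitrary: k U)
  case 0 then show ?case by simp
next
  case (Suc f)
  show ?case
  proof (cases "U = {}")
    case False
    let ?u = "Min U"
    have uU: "?u \<in> U" using minU[OF Suc.prems(1) False] by blast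
    show ?thesis
    proof (cases "x = ?u")
      case True then show ?thesis using in_below[OF Suc.prems(1) uU] below_rem by blast
    next
      case ne: False
      then have "Some x \<in> set (psearch par m (n-m) f k (U - {?u} \<union> children par m (Lab ?u)))"
        using Suc.prems(2) ps_cons[OF False] by simp
      then show ?thesis using Suc.IH[OF inv_step[OF Suc.prems(1) uU]] rem_step[OF Suc.prems(1) uU] by blast
    qed
  next
    case True
    show ?thesis
    proof (cases "k < n - m")
      case lt: True
      have "Some x \<in> set (psearch par m (n-m) f (Suc k) (children par m (Root (Suc k))))"
        using Suc.prems(2) True ps_root[OF lt] by simp
      moreover have inv': "finv par m (n-m) (Suc k) (children par m (Root (Suc k)))" using inv_root lt by simp
      ultimately show ?thesis using Suc.IH[OF inv'] rem_root True by simp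
    next
      case False then show ?thesis using Suc.prems(2) True ps_end by simp
    qed
  qed
qed

lemma PA2: "finv par m (n-m) k U \<Longrightarrow> p < length (psearch par m (n-m) f k U) \<Longrightarrow> q < length (psearch par m (n-m) f k U)
  \<Longrightarrow> psearch par m (n-m) f k U ! p = Some x \<Longrightarrow> psearch par m (n-m) f k U ! q = Some x \<Longrightarrow> p = q"
proof (induction f arbitrary: k U p q)
  case 0 then show ?case by simp
next
  case (Suc f)
  show ?case
  proof (cases "U = {}")
    case False
    let ?u = "Min U"
    let ?U' = "U - {?u} \<union> children par m (Lab ?u)"
    let ?w = "psearch par m (n-m) f k ?U'"
    have uU: "?u \<in> U" using minU[OF Suc.prems(1) False] by blast
    have inv': "finv par m (n-m) k ?U'" using inv_step[OF Suc.prems(1) uU] .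
    have w: "psearch par m (n-m) (Suc f) k U = Some ?u # ?w" using ps_cons[OF False] .
    have nu: "Some ?u \<notin> set ?w" using PA1[OF inv'] rem_step[OF Suc.prems(1) uU] by blast
    show ?thesis
    proof (cases p)
      case 0
      then have "x = ?u" using Suc.prems(4) w by simp
      then show ?thesis using Suc.prems(3,5) w nu 0 by (cases q) (auto simp: in_set_conv_nth)
    next
      case (Suc p')
      show ?thesis
      proof (cases q)
        case 0
        then have "x = ?u" using Suc.prems(5) w by simp
        then show ?thesis using Suc.prems(2,4) w nu \<open>p = Suc p'\<close> by (auto simp: in_set_conv_nth)
      next
        case (Suc q')
        then show ?thesis using Suc.IH[OF inv', of p' q'] Suc.prems w \<open>p = Suc p'\<close> by simp
      qed
    qed
  next
    case True
    show ?thesis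
    proof (cases "k < n - m")
      case lt: True
      let ?w = "psearch par m (n-m) f (Suc k) (children par m (Root (Suc k)))"
      have w: "psearch par m (n-m) (Suc f) k U = None # ?w" using ps_root[OF lt] True by simp
      have inv': "finv par m (n-m) (Suc k) (children par m (Root (Suc k)))" using inv_root lt by simp
      show ?thesis
      proof (cases p)
        case 0 then show ?thesis using Suc.prems(4) w by simp
      next
        case (Suc p')
        show ?thesis
        proof (cases q)
          case 0 then show ?thesis using Suc.prems(5) w by simp
        next
          case (Suc q')
          then show ?thesis using Suc.IH[OF inv', of p' q'] Suc.prems w \<open>p = Suc p'\<close> by simp
        qed
      qed
    next
      case False then show ?thesis using Suc.prems(2) True ps_end by simp
    qed
  qed
qed

lemma PA3: "card (frem par m k U) + (n - m - k) \<le> f \<Longrightarrow> finv par m (n-m) k U \<Longrightarrow> x \<in> frem par m k U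
   \<Longrightarrow> Some x \<in> set (psearch par m (n-m) f k U)"
proof (induction f arbitrary: k U)
  case 0
  have "finite (frem par m k U)" using rem_sub finite_subset by blast
  then show ?case using 0 by auto
next
  case (Suc f)
  have fin: "finite (frem par m k U)" using rem_sub finite_subset by blast
  show ?case
  proof (cases "U = {}")
    case False
    let ?u = "Min U"
    let ?U' = "U - {?u} \<union> children par m (Lab ?u)"
    have uU: "?u \<in> U" using minU[OF Suc.prems(2) False] by blast
    have inv': "finv par m (n-m) k ?U'" using inv_step[OF Suc.prems(2) uU] .
    have R: "frem par m k ?U' = frem par m k U - {?u}" using rem_step[OF Suc.prems(2) uU] .
    have ur: "?u \<in> frem par m k U" using in_below[OF Suc.prems(2) uU] below_rem by blast
    have c: "card (frem par m k ?U') + 1 = card (frem par m k U)"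
      using R fin ur by (metis card_Suc_Diff1 Suc_eq_plus1)
    show ?thesis
    proof (cases "x = ?u")
      case True then show ?thesis using ps_cons[OF False] by simp
    next
      case ne: False
      have "Some x \<in> set (psearch par m (n-m) f k ?U')"
        using Suc.IH[OF _ inv'] c Suc.prems(1,3) R ne by simp
      then show ?thesis using ps_cons[OF False] by simp
    qed
  next
    case True
    show ?thesis
    proof (cases "k < n - m")
      case lt: True
      have inv': "finv par m (n-m) (Suc k) (children par m (Root (Suc k)))" using inv_root lt by simp
      have "Some x \<in> set (psearch par m (n-m) f (Suc k) (children par m (Root (Suc k))))"
        using Suc.IH[OF _ inv'] Suc.prems(1,3) rem_root True lt by simp
      then show ?thesis using ps_root[OF lt] True by simp
    next
      case False then show ?thesis using Suc.prems(3) True rem_end by simp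
    qed
  qed
qed


lemma PB: "finv par m (n-m) k U \<Longrightarrow> p < length (psearch par m (n-m) f k U)
  \<Longrightarrow> psearch par m (n-m) f k U ! p = Some v \<Longrightarrow> (\<forall>q<p. psearch par m (n-m) f k U ! q \<noteq> None)
  \<Longrightarrow> v \<in> fbelow par m U"
proof (induction f arbitrary: k U p)
  case 0 then show ?case by simp
next
  case (Suc f)
  show ?case
  proof (cases "U = {}")
    case False
    let ?u = "Min U"
    let ?U' = "U - {?u} \<union> children par m (Lab ?u)"
    let ?w = "psearch par m (n-m) f k ?U'"
    have uU: "?u \<in> U" using minU[OF Suc.prems(1) False] by blast
    have inv': "finv par m (n-m) k ?U'" using inv_step[OF Suc.prems(1) uU] .
    have w: "psearch par m (n-m) (Suc f) k U = Some ?u # ?w" using ps_cons[OF False] .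
    show ?thesis
    proof (cases p)
      case 0 then show ?thesis using Suc.prems(3) w in_below[OF Suc.prems(1) uU] by simp
    next
      case (Suc p')
      have "\<forall>q<p'. ?w ! q \<noteq> None"
      proof (intro allI impI)
        fix q assume "q < p'"
        then show "?w ! q \<noteq> None" using Suc.prems(4) w \<open>p = Suc p'\<close> by (metis Suc_mono nth_Cons_Suc)
      qed
      then have "v \<in> fbelow par m ?U'" using Suc.IH[OF inv', of p'] Suc.prems w \<open>p = Suc p'\<close> by simp
      then show ?thesis using below_step[OF Suc.prems(1) uU] by blast
    qed
  next
    case True
    show ?thesis
    proof (cases "k < n - m")
      case lt: True
      let ?w = "psearch par m (n-m) f (Suc k) (children par m (Root (Suc k)))"
      have w: "psearch par m (n-m) (Suc f) k U = None # ?w" using ps_root[OF lt] True by simp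
      show ?thesis
      proof (cases p)
        case 0 then show ?thesis using Suc.prems(3) w by simp
      next
        case (Suc p') then show ?thesis using Suc.prems(4) w by auto
      qed
    next
      case False then show ?thesis using Suc.prems(2) True ps_end by simp
    qed
  qed
qed

lemma PC: "finv par m (n-m) k U \<Longrightarrow> p < length (psearch par m (n-m) f k U)
  \<Longrightarrow> psearch par m (n-m) f k U ! p = Some x \<Longrightarrow> anc par x j \<Longrightarrow> j \<noteq> x
  \<Longrightarrow> (j \<notin> frem par m k U \<and> (\<forall>q<p. psearch par m (n-m) f k U ! q \<noteq> None)) \<or>
      (\<exists>q<p. psearch par m (n-m) f k U ! q = Some j \<and>
         (\<forall>r. q \<le> r \<and> r < p \<longrightarrow> psearch par m (n-m) f k U ! r \<noteq> None))"
proof (induction f arbitrary: k U p)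
  case 0 then show ?case by simp
next
  case (Suc f)
  show ?case
  proof (cases "U = {}")
    case False
    let ?u = "Min U"
    let ?U' = "U - {?u} \<union> children par m (Lab ?u)"
    let ?w = "psearch par m (n-m) f k ?U'"
    have uU: "?u \<in> U" using minU[OF Suc.prems(1) False] by blast
    have inv': "finv par m (n-m) k ?U'" using inv_step[OF Suc.prems(1) uU] .
    have w: "psearch par m (n-m) (Suc f) k U = Some ?u # ?w" using ps_cons[OF False] .
    show ?thesis
    proof (cases p)
      case 0
      then have xu: "x = ?u" using Suc.prems(3) w by simp
      have "j \<notin> fbelow par m U" using S1[OF Suc.prems(1) uU] Suc.prems(4,5) xu by simp
      moreover have "intree par u k" if "u \<in> U" for u using Suc.prems(1) that unfolding finv_def by blast
      then have "intree par j k" using intree_down uU Suc.prems(4) xu by blast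
      then have "j \<notin> {x \<in> {1..m}. \<exists>k'>k. intree par x k'}" using intree_unique by fastforce
      ultimately show ?thesis unfolding frem_def using 0 by blast
    next
      case (Suc p')
      have len: "p' < length ?w" using Suc.prems(2) w \<open>p = Suc p'\<close> by simp
      have xp: "?w ! p' = Some x" using Suc.prems(3) w \<open>p = Suc p'\<close> by simp
      from Suc.IH[OF inv' len xp Suc.prems(4,5)] show ?thesis
      proof
        assume a: "j \<notin> frem par m k ?U' \<and> (\<forall>q<p'. ?w ! q \<noteq> None)"
        show ?thesis
        proof (cases "j = ?u")
          case True
          have "\<forall>r. 0 \<le> r \<and> r < p \<longrightarrow> psearch par m (n-m) (Suc f) k U ! r \<noteq> None"
          proof (intro allI impI)
            fix r assume "0 \<le> r \<and> r < p"
            then show "psearch par m (n-m) (Suc f) k U ! r \<noteq> None" using a w \<open>p = Suc p'\<close>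
              by (cases r) auto
          qed
          then show ?thesis using w True \<open>p = Suc p'\<close> by (intro disjI2 exI[of _ 0]) simp
        next
          case ne: False
          have "j \<notin> frem par m k U" using a rem_step[OF Suc.prems(1) uU] ne by blast
          moreover have "\<forall>q<p. psearch par m (n-m) (Suc f) k U ! q \<noteq> None"
          proof (intro allI impI)
            fix q assume "q < p"
            then show "psearch par m (n-m) (Suc f) k U ! q \<noteq> None" using a w \<open>p = Suc p'\<close>
              by (cases q) auto
          qed
          ultimately show ?thesis by blast
        qed
      next
        assume "\<exists>q<p'. ?w ! q = Some j \<and> (\<forall>r. q \<le> r \<and> r < p' \<longrightarrow> ?w ! r \<noteq> None)"
        then obtain q where q: "q < p'" "?w ! q = Some j" "\<forall>r. q \<le> r \<and> r < p' \<longrightarrow> ?w ! r \<noteq> None" by blast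
        have "\<forall>r. Suc q \<le> r \<and> r < p \<longrightarrow> psearch par m (n-m) (Suc f) k U ! r \<noteq> None"
        proof (intro allI impI)
          fix r assume "Suc q \<le> r \<and> r < p"
          then show "psearch par m (n-m) (Suc f) k U ! r \<noteq> None" using q(3) w \<open>p = Suc p'\<close>
            by (cases r) auto
        qed
        then show ?thesis using q w \<open>p = Suc p'\<close> by (intro disjI2 exI[of _ "Suc q"]) simp
      qed
    qed
  next
    case True
    show ?thesis
    proof (cases "k < n - m")
      case lt: True
      let ?U' = "children par m (Root (Suc k))"
      let ?w = "psearch par m (n-m) f (Suc k) ?U'"
      have w: "psearch par m (n-m) (Suc f) k U = None # ?w" using ps_root[OF lt] True by simp
      have inv': "finv par m (n-m) (Suc k) ?U'" using inv_root lt by simp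
      show ?thesis
      proof (cases p)
        case 0 then show ?thesis using Suc.prems(3) w by simp
      next
        case (Suc p')
        have len: "p' < length ?w" using Suc.prems(2) w \<open>p = Suc p'\<close> by simp
        have xp: "?w ! p' = Some x" using Suc.prems(3) w \<open>p = Suc p'\<close> by simp
        from Suc.IH[OF inv' len xp Suc.prems(4,5)] show ?thesis
        proof
          assume a: "j \<notin> frem par m (Suc k) ?U' \<and> (\<forall>q<p'. ?w ! q \<noteq> None)"
          have xr: "x \<in> frem par m (Suc k) ?U'" using PA1[OF inv'] len xp by (metis nth_mem)
          have "x \<in> fbelow par m {}" using S8[of x k "{}" j] xr a rem_root Suc.prems(4) by simp
          then show ?thesis unfolding fbelow_def by simp
        next
          assume "\<exists>q<p'. ?w ! q = Some j \<and> (\<forall>r. q \<le> r \<and> r < p' \<longrightarrow> ?w ! r \<noteq> None)"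
          then obtain q where q: "q < p'" "?w ! q = Some j" "\<forall>r. q \<le> r \<and> r < p' \<longrightarrow> ?w ! r \<noteq> None" by blast
          have "\<forall>r. Suc q \<le> r \<and> r < p \<longrightarrow> psearch par m (n-m) (Suc f) k U ! r \<noteq> None"
          proof (intro allI impI)
            fix r assume "Suc q \<le> r \<and> r < p"
            then show "psearch par m (n-m) (Suc f) k U ! r \<noteq> None" using q(3) w \<open>p = Suc p'\<close>
              by (cases r) auto
          qed
          then show ?thesis using q w \<open>p = Suc p'\<close> by (intro disjI2 exI[of _ "Suc q"]) simp
        qed
      qed
    next
      case False then show ?thesis using Suc.prems(2) True ps_end by simp
    qed
  qed
qed

lemma PD: "finv par m (n-m) k U \<Longrightarrow> q < p \<Longrightarrow> p < length (psearch par m (n-m) f k U)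
  \<Longrightarrow> psearch par m (n-m) f k U ! q = Some a \<Longrightarrow> psearch par m (n-m) f k U ! p = Some v
  \<Longrightarrow> (\<forall>r. q \<le> r \<and> r < p \<longrightarrow> psearch par m (n-m) f k U ! r \<noteq> None) \<Longrightarrow> v < a
  \<Longrightarrow> \<exists>b. anc par v b \<and> b \<noteq> v \<and> v < b"
proof (induction f arbitrary: k U p q)
  case 0 then show ?case by simp
next
  case (Suc f)
  show ?case
  proof (cases "U = {}")
    case False
    let ?u = "Min U"
    let ?U' = "U - {?u} \<union> children par m (Lab ?u)"
    let ?w = "psearch par m (n-m) f k ?U'"
    have uU: "?u \<in> U" using minU[OF Suc.prems(1) False] by blast
    have inv': "finv par m (n-m) k ?U'" using inv_step[OF Suc.prems(1) uU] .
    have w: "psearch par m (n-m) (Suc f) k U = Some ?u # ?w" using ps_cons[OF False] .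
    obtain p' where p': "p = Suc p'" using Suc.prems(2) by (cases p) auto
    have len: "p' < length ?w" using Suc.prems(3) w p' by simp
    have vp: "?w ! p' = Some v" using Suc.prems(5) w p' by simp
    show ?thesis
    proof (cases q)
      case 0
      then have au: "a = ?u" using Suc.prems(4) w by simp
      have "\<forall>q<p'. ?w ! q \<noteq> None"
      proof (intro allI impI)
        fix r assume "r < p'"
        then show "?w ! r \<noteq> None" using Suc.prems(6) w p' 0
          by (metis Suc_mono nth_Cons_Suc zero_le)
      qed
      then have "v \<in> fbelow par m ?U'" using PB[OF inv' len vp] by blast
      then obtain c where c: "c \<in> ?U'" "anc par v c" unfolding fbelow_def by blast
      show ?thesis
      proof (cases "c \<in> U - {?u}")
        case True
        then have "?u \<le> c" using minU[OF Suc.prems(1) False] by blast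
        then show ?thesis using c au Suc.prems(7) by (intro exI[of _ c]) auto
      next
        case False
        then have "par c = Lab ?u" using c unfolding children_def by auto
        then have "anc par v ?u" using c anc_trans by (blast intro: anc.intros)
        then show ?thesis using au Suc.prems(7) by (intro exI[of _ ?u]) auto
      qed
    next
      case (Suc q')
      have "\<forall>r. q' \<le> r \<and> r < p' \<longrightarrow> ?w ! r \<noteq> None"
      proof (intro allI impI)
        fix r assume "q' \<le> r \<and> r < p'"
        then show "?w ! r \<noteq> None" using Suc.prems(6) w p' \<open>q = Suc q'\<close>
          by (metis Suc_le_mono Suc_mono nth_Cons_Suc)
      qed
      then show ?thesis using Suc.IH[OF inv', of q' p'] Suc.prems w p' \<open>q = Suc q'\<close> by simp
    qed
  next
    case True
    show ?thesis
    proof (cases "k < n - m")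
      case lt: True
      let ?U' = "children par m (Root (Suc k))"
      let ?w = "psearch par m (n-m) f (Suc k) ?U'"
      have w: "psearch par m (n-m) (Suc f) k U = None # ?w" using ps_root[OF lt] True by simp
      have inv': "finv par m (n-m) (Suc k) ?U'" using inv_root lt by simp
      obtain p' where p': "p = Suc p'" using Suc.prems(2) by (cases p) auto
      show ?thesis
      proof (cases q)
        case 0 then show ?thesis using Suc.prems(4) w by simp
      next
        case (Suc q')
        have "\<forall>r. q' \<le> r \<and> r < p' \<longrightarrow> ?w ! r \<noteq> None"
        proof (intro allI impI)
          fix r assume "q' \<le> r \<and> r < p'"
          then show "?w ! r \<noteq> None" using Suc.prems(6) w p' \<open>q = Suc q'\<close>
            by (metis Suc_le_mono Suc_mono nth_Cons_Suc)
        qed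
        then show ?thesis using Suc.IH[OF inv', of q' p'] Suc.prems w p' \<open>q = Suc q'\<close> by simp
      qed
    next
      case False then show ?thesis using Suc.prems(3) True ps_end by simp
    qed
  qed
qed

end

theorem lemma4p5:
  assumes "ordered_forest m n par"
  shows "forest_rec m par = word_rec (priority_traversal m n par)"
proof -
  let ?U = "children par m (Root 0)"
  define w where "w = psearch par m (n-m) n 0 ?U"
  have wd: "priority_traversal m n par = w" unfolding priority_traversal_def w_def ..
  have inv: "finv par m (n-m) 0 ?U" using inv_root[OF assms] by simp
  have R: "frem par m 0 ?U = {1..m}" using rem_init[OF assms] .
  have mn: "m \<le> n" using assms unfolding ordered_forest_def by simp
  have "forest_rec m par = word_rec w"
  proof
    show "forest_rec m par \<subseteq> word_rec w"
    proof
      fix x assume x: "x \<in> forest_rec m par"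
      then have xm: "x \<in> {1..m}" and rec: "\<forall>j. anc par x j \<longrightarrow> j \<le> x" unfolding forest_rec_def by auto
      have "Some x \<in> set w" unfolding w_def using PA3[OF assms _ inv] R xm mn by simp
      then obtain p where p: "p < length w" "w ! p = Some x" by (auto simp: in_set_conv_nth)
      have "\<forall>q<p. (\<forall>r. q \<le> r \<and> r < p \<longrightarrow> w ! r \<noteq> None) \<longrightarrow> (\<forall>y. w ! q = Some y \<longrightarrow> y < x)"
      proof (intro allI impI)
        fix q y assume q: "q < p" and nn: "\<forall>r. q \<le> r \<and> r < p \<longrightarrow> w ! r \<noteq> None" and y: "w ! q = Some y"
        have "y \<noteq> x" using PA2[OF assms inv, of p n q x] p q y unfolding w_def by auto
        moreover have "\<not> x < y"
        proof
          assume "x < y"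
          then obtain b where "anc par x b" "b \<noteq> x" "x < b"
            using PD[OF assms inv q, of n y x] p y nn unfolding w_def by blast
          then show False using rec by fastforce
        qed
        ultimately show "y < x" by simp
      qed
      then show "x \<in> word_rec w" unfolding word_rec_def using p by blast
    qed
    show "word_rec w \<subseteq> forest_rec m par"
    proof
      fix x assume "x \<in> word_rec w"
      then obtain p where p: "p < length w" "w ! p = Some x"
        and lr: "\<forall>q<p. (\<forall>r. q \<le> r \<and> r < p \<longrightarrow> w ! r \<noteq> None) \<longrightarrow> (\<forall>y. w ! q = Some y \<longrightarrow> y < x)"
        unfolding word_rec_def by blast
      have "x \<in> frem par m 0 ?U" using PA1[OF assms inv, of x n] p nth_mem unfolding w_def by metis
      then have xm: "x \<in> {1..m}" using R by simp
      have "j \<le> x" if a: "anc par x j" for j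
      proof (cases "j = x")
        case False
        have jm: "j \<in> {1..m}" using anc_closed[OF a assms xm] .
        have "\<exists>q<p. w ! q = Some j \<and> (\<forall>r. q \<le> r \<and> r < p \<longrightarrow> w ! r \<noteq> None)"
          using PC[OF assms inv, of p n x j] p a False R jm unfolding w_def by auto
        then show ?thesis using lr by fastforce
      qed simp
      then show "x \<in> forest_rec m par" unfolding forest_rec_def using xm by blast
    qed
  qed
  then show ?thesis using wd by simp
qed

end
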